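(* Let $\phi\colon P(\mathbb{R})\to P(\mathbb{R})$ be a surjective isometry with respect to the Kuiper distance, and let $f\colon\mathbb{R}\to\mathbb{R}$ be a bijection such that $\phi(\mu)(\{f(x)\})=\mu(\{x\})$ for all $\mu\in P(\mathbb{R})$ and $x\in\mathbb{R}$ (equivalently, $\phi(\delta_x)=\delta_{f(x)}$ for all $x$). Then $f$ is a homeomorphism of $\mathbb{R}$ (i.e. a monotone bijection).
   Context: $P(\mathbb{R})$ is the set of Borel probability measures on $\mathbb{R}$, with the Kuiper distance $d_{Ku}(\mu,\nu)=\sup\{|\mu(I)-\nu(I)| : I\text{ a non-degenerate interval of }\mathbb{R}\}$. $\delta_x$ denotes the Dirac measure at $x$. *)

theory Defs
  imports "HOL-Probability.Probability"
begin

definition Prob_R :: "real measure set" where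
  "Prob_R = {M. sets M = sets borel \<and> prob_space M}"

definition nondeg_interval :: "real set \<Rightarrow> bool" where
  "nondeg_interval I \<longleftrightarrow> is_interval I \<and> (\<exists>a b. a \<in> I \<and> b \<in> I \<and> a < b)"

definition kuiper_dist :: "real measure \<Rightarrow> real measure \<Rightarrow> real" where
  "kuiper_dist \<mu> \<nu> = (SUP I \<in> {I. nondeg_interval I}. \<bar>measure \<mu> I - measure \<nu> I\<bar>)"

end

theory Submission
  imports Defs
begin
definition betw :: "real \<Rightarrow> real \<Rightarrow> real \<Rightarrow> bool" where
  "betw a x b \<longleftrightarrow> (a < x \<and> x < b) \<or> (b < x \<and> x < a)"

definition sep :: "real \<Rightarrow> real \<Rightarrow> real \<Rightarrow> real \<Rightarrow> bool" where
  "sep a b c d \<longleftrightarrow> (betw a c b \<noteq> betw a d b)"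

definition SP :: "(real \<Rightarrow> real) \<Rightarrow> bool" where
  "SP f \<longleftrightarrow> (\<forall>a b c d. distinct [a,b,c,d] \<longrightarrow> sep a b c d \<longrightarrow> sep (f a) (f b) (f c) (f d))"

lemma SPD: "SP f \<Longrightarrow> distinct [a,b,c,d] \<Longrightarrow> sep a b c d \<Longrightarrow> sep (f a) (f b) (f c) (f d)"
  unfolding SP_def by blast

lemma SP_neg: "SP f \<Longrightarrow> SP (\<lambda>x. - f x)"
  unfolding SP_def sep_def betw_def by (metis neg_less_iff_less)

lemma lemL:
  assumes inj: "inj f" and su: "surj f" and sp: "SP f"
    and xz: "x < z" and fxz: "f x < f z"
    and ins: "\<And>u. x < u \<Longrightarrow> u < z \<Longrightarrow> f u < f x \<or> f z < f u"
    and outs: "\<And>w. w < x \<or> z < w \<Longrightarrow> f x < f w \<and> f w < f z"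
  shows False
proof -
  define N where "N = {u. x < u \<and> u < z \<and> f u < f x}"
  define P where "P = {u. x < u \<and> u < z \<and> f z < f u}"
  have inN: "f u1 < f x" if "u1 < u2" "x < u1" "u2 < z" "f u2 < f x" for u1 u2
  proof (rule ccontr)
    assume "\<not> f u1 < f x"
    with ins that have "f z < f u1" by force
    have "sep x u2 u1 z" using that unfolding sep_def betw_def by auto
    moreover have "distinct [x,u2,u1,z]" using that by auto
    ultimately have "sep (f x) (f u2) (f u1) (f z)" using SPD[OF sp] by blast
    thus False using \<open>f z < f u1\<close> that fxz unfolding sep_def betw_def by auto
  qed
  have decN: "f u2 < f u1" if "u1 < u2" "u1 \<in> N" "u2 \<in> N" for u1 u2
  proof -
    have "sep x u2 u1 z" using that unfolding sep_def betw_def N_def by auto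
    moreover have "distinct [x,u2,u1,z]" using that unfolding N_def by auto
    ultimately have "sep (f x) (f u2) (f u1) (f z)" using SPD[OF sp] by blast
    thus ?thesis using that fxz unfolding sep_def betw_def N_def by auto
  qed
  have decP: "f u2 < f u1" if "u1 < u2" "u1 \<in> P" "u2 \<in> P" for u1 u2
  proof -
    have "sep u1 z u2 x" using that unfolding sep_def betw_def P_def by auto
    moreover have "distinct [u1,z,u2,x]" using that unfolding P_def by auto
    ultimately have "sep (f u1) (f z) (f u2) (f x)" using SPD[OF sp] by blast
    thus ?thesis using that fxz unfolding sep_def betw_def P_def by auto
  qed
  have hitN: "\<exists>u\<in>N. f u = v" if "v < f x" for v
  proof -
    obtain u where u: "f u = v" using su by (metis surj_def)
    have "u \<noteq> x" "u \<noteq> z" using u that fxz by auto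
    moreover have "\<not> (u < x \<or> z < u)" using outs[of u] u that by auto
    ultimately have "x < u" "u < z" by auto
    thus ?thesis using u that unfolding N_def by auto
  qed
  have hitP: "\<exists>u\<in>P. f u = v" if "f z < v" for v
  proof -
    obtain u where u: "f u = v" using su by (metis surj_def)
    have "u \<noteq> x" "u \<noteq> z" using u that fxz by auto
    moreover have "\<not> (u < x \<or> z < u)" using outs[of u] u that by auto
    ultimately have "x < u" "u < z" by auto
    thus ?thesis using u that unfolding P_def by auto
  qed
  obtain n0 where n0: "n0 \<in> N" using hitN[of "f x - 1"] by auto
  obtain p0 where p0: "p0 \<in> P" using hitP[of "f z + 1"] by auto
  have NltP: "n < p" if "n \<in> N" "p \<in> P" for n p
  proof (rule ccontr)
    assume "\<not> n < p"
    moreover have "n \<noteq> p" using that fxz unfolding N_def P_def by auto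
    ultimately have "p < n" by auto
    hence "f p < f x" using inN[of p n] that unfolding N_def P_def by auto
    thus False using that fxz unfolding P_def by auto
  qed
  define c where "c = Sup N"
  have bdd: "bdd_above N" unfolding N_def bdd_above_def by (auto intro: less_imp_le)
  have cN: "n \<le> c" if "n \<in> N" for n using cSup_upper[OF that bdd] c_def by simp
  have cP: "c \<le> p" if "p \<in> P" for p
    unfolding c_def using n0 NltP that by (intro cSup_least) (auto intro: less_imp_le)
  have "x < c" using cN[OF n0] n0 unfolding N_def by auto
  moreover have "c < z" using cP[OF p0] p0 unfolding P_def by auto
  ultimately have "c \<in> N \<or> c \<in> P" using ins[of c] unfolding N_def P_def by auto
  thus False
  proof
    assume c: "c \<in> N"
    then obtain u where u: "u \<in> N" "f u = f c - 1" using hitN[of "f c - 1"] unfolding N_def by auto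
    have "u \<le> c" using cN[OF u(1)] .
    moreover have "u \<noteq> c" using u by auto
    ultimately have "f c < f u" using decN[of u c] u c by auto
    thus False using u by auto
  next
    assume c: "c \<in> P"
    then obtain u where u: "u \<in> P" "f u = f c + 1" using hitP[of "f c + 1"] unfolding P_def by auto
    have "c \<le> u" using cP[OF u(1)] .
    moreover have "u \<noteq> c" using u by auto
    ultimately have "f u < f c" using decP[of c u] u c by auto
    thus False using u by auto
  qed
qed

lemma lemB:
  assumes sp: "SP f" and "x < y" "y < z" and nb: "\<not> betw (f x) (f y) (f z)"
  shows "\<And>u. x < u \<Longrightarrow> u < z \<Longrightarrow> \<not> betw (f x) (f u) (f z)"
    and "\<And>w. w < x \<or> z < w \<Longrightarrow> betw (f x) (f w) (f z)"
proof -
  show out: "betw (f x) (f w) (f z)" if "w < x \<or> z < w" for w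
  proof -
    have "sep x z y w" using that assms(2,3) unfolding sep_def betw_def by (smt (verit))
    moreover have "distinct [x,z,y,w]" using that assms(2,3) by auto
    ultimately have "sep (f x) (f z) (f y) (f w)" using SPD[OF sp] by blast
    thus ?thesis using nb unfolding sep_def by auto
  qed
  fix u assume u: "x < u" "u < z"
  have "sep x z u (z+1)" using u unfolding sep_def betw_def by (smt (verit))
  moreover have "distinct [x,z,u,z+1]" using u by auto
  ultimately have "sep (f x) (f z) (f u) (f (z+1))" using SPD[OF sp] by blast
  thus "\<not> betw (f x) (f u) (f z)" using out[of "z+1"] unfolding sep_def by auto
qed

lemma lemBetw:
  assumes inj: "inj f" and su: "surj f" and sp: "SP f" and "x < y" "y < z"
  shows "betw (f x) (f y) (f z)"
proof (rule ccontr)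
  assume nb: "\<not> betw (f x) (f y) (f z)"
  note I = lemB(1)[OF sp assms(4,5) nb] and O = lemB(2)[OF sp assms(4,5) nb]
  have ne: "f x \<noteq> f z" using inj assms by (metis injD less_irrefl order.strict_trans)
  have neu: "f u \<noteq> f x \<and> f u \<noteq> f z" if "x < u" "u < z" for u
    using inj that by (metis injD less_irrefl)
  show False
  proof (cases "f x < f z")
    case True
    show False
    proof (rule lemL[OF inj su sp _ True])
      show "x < z" using assms by auto
      show "f u < f x \<or> f z < f u" if "x < u" "u < z" for u
        using I[OF that] neu[OF that] True unfolding betw_def by auto
      show "f x < f w \<and> f w < f z" if "w < x \<or> z < w" for w
        using O[OF that] True unfolding betw_def by auto
    qed
  next
    case False
    hence F: "- f x < - f z" using ne by auto
    have inj': "inj (\<lambda>x. - f x)" using inj by (simp add: inj_def)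
    have su': "surj (\<lambda>x. - f x)" using su by (metis (no_types, lifting) minus_minus surj_def)
    show False
    proof (rule lemL[OF inj' su' SP_neg[OF sp] _ F])
      show "x < z" using assms by auto
      show "- f u < - f x \<or> - f z < - f u" if "x < u" "u < z" for u
        using I[OF that] neu[OF that] F unfolding betw_def by auto
      show "- f x < - f w \<and> - f w < - f z" if "w < x \<or> z < w" for w
        using O[OF that] F unfolding betw_def by auto
    qed
  qed
qed

lemma lemMono:
  fixes f :: "real \<Rightarrow> real"
  assumes inj: "inj f" and bt: "\<And>x y z. x < y \<Longrightarrow> y < z \<Longrightarrow> betw (f x) (f y) (f z)"
  shows "strict_mono f \<or> strict_mono (\<lambda>x. - f x)"
proof -
  have key: "(f a < f b) = (f c < f d)" if "a < b" "c < d" for a b c d :: real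
  proof -
    define s where "s = min a c - 1"
    define e where "e = max b d + 1"
    have se: "s < a" "s < c" "b < e" "d < e" "a < e" "c < e" using that unfolding s_def e_def by (simp_all add: min_def max_def)
    have 1: "(f a < f b) = (f a < f e)" using bt[of a b e] that se unfolding betw_def by (smt (verit))
    have 2: "(f a < f e) = (f s < f e)" using bt[of s a e] that se unfolding betw_def by (smt (verit))
    have 3: "(f c < f d) = (f c < f e)" using bt[of c d e] that se unfolding betw_def by (smt (verit))
    have 4: "(f c < f e) = (f s < f e)" using bt[of s c e] that se unfolding betw_def by (smt (verit))
    show ?thesis using 1 2 3 4 by simp
  qed
  have ne: "f a \<noteq> f b" if "a < b" for a b :: real
  proof
    assume "f a = f b"
    with inj have "a = b" by (rule injD)
    thus False using that by simp
  qed
  show ?thesis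
  proof (cases "f 0 < f 1")
    case True
    have "strict_mono f" unfolding strict_mono_def
    proof (intro allI impI)
      fix a b :: real assume "a < b"
      thus "f a < f b" using key[of a b 0 1] True by simp
    qed
    thus ?thesis by simp
  next
    case False
    have "strict_mono (\<lambda>x. - f x)" unfolding strict_mono_def
    proof (intro allI impI)
      fix a b :: real assume "a < b"
      hence "\<not> f a < f b" using key[of a b 0 1] False by auto
      thus "- f a < - f b" using ne[OF \<open>a<b\<close>] by auto
    qed
    thus ?thesis by simp
  qed
qed

lemma cont_mono:
  fixes f :: "real \<Rightarrow> real"
  assumes "surj f" "mono f"
  shows "continuous_on UNIV f"
proof (rule continuous_onI_mono)
  show "open (range f)" using assms(1) by simp
  show "f x \<le> f y" if "x \<le> y" for x y using assms(2) that by (rule monoD)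
qed

lemma homeo_sm:
  fixes f :: "real \<Rightarrow> real"
  assumes b: "bij f" and sm: "strict_mono f"
  shows "homeomorphism UNIV UNIV f (inv f)"
proof -
  have su: "surj f" using b bij_is_surj by auto
  have ij: "inj f" using b bij_is_inj by auto
  have smg: "mono (inv f)" unfolding mono_def
  proof (intro allI impI)
    fix x y :: real assume "x \<le> y"
    show "inv f x \<le> inv f y"
    proof (rule ccontr)
      assume "\<not> inv f x \<le> inv f y"
      hence "f (inv f y) < f (inv f x)" using sm by (simp add: strict_mono_less)
      moreover have "f (inv f y) = y" "f (inv f x) = x" using su by (simp_all add: surj_f_inv_f)
      ultimately show False using \<open>x \<le> y\<close> by simp
    qed
  qed
  have sg: "surj (inv f)" using ij by (rule inj_imp_surj_inv)
  have c1: "continuous_on UNIV f" by (rule cont_mono[OF su strict_mono_mono[OF sm]])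
  have c2: "continuous_on UNIV (inv f)" by (rule cont_mono[OF sg smg])
  have e1: "\<forall>x\<in>UNIV. inv f (f x) = x" using ij by simp
  have e2: "\<forall>y\<in>UNIV. f (inv f y) = y" using su by (simp add: surj_f_inv_f)
  show ?thesis unfolding homeomorphism_def
    using c1 c2 e1 e2 su sg by blast
qed

lemma homeo_final:
  fixes f :: "real \<Rightarrow> real"
  assumes b: "bij f" and sm: "strict_mono f \<or> strict_mono (\<lambda>x. - f x)"
  shows "\<exists>g. homeomorphism UNIV UNIV f g"
  using sm
proof
  assume "strict_mono f" thus ?thesis using homeo_sm[OF b] by blast
next
  assume sm': "strict_mono (\<lambda>x. - f x)"
  have b': "bij (\<lambda>x. - f x)"
    using bij_comp[OF b bij_uminus[where 'a=real]] by (simp add: comp_def)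
  define h where "h = inv (\<lambda>x. - f x)"
  have H: "homeomorphism UNIV UNIV (\<lambda>x. - f x) h" unfolding h_def by (rule homeo_sm[OF b' sm'])
  have "homeomorphism UNIV UNIV f (\<lambda>y. h (- y))"
    unfolding homeomorphism_def
  proof (intro conjI)
    show "\<forall>x\<in>UNIV. h (- f x) = x" using H unfolding homeomorphism_def by simp
    show "\<forall>y\<in>UNIV. f (h (- y)) = y" using H unfolding homeomorphism_def
      by (metis UNIV_I minus_minus)
    show "f ` UNIV = UNIV" using b bij_is_surj by auto
    show "(\<lambda>y. h (- y)) ` UNIV = UNIV" using H unfolding homeomorphism_def
      by (metis (no_types, lifting) UNIV_I minus_minus surj_def)
    have "continuous_on UNIV (\<lambda>x. - f x)" using H unfolding homeomorphism_def by simp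
    hence "continuous_on UNIV (\<lambda>x. - (- f x))" by (rule continuous_on_minus)
    thus "continuous_on UNIV f" by simp
    have "continuous_on UNIV h" using H unfolding homeomorphism_def by simp
    moreover have "continuous_on UNIV (\<lambda>y::real. - y)" by (intro continuous_intros)
    ultimately show "continuous_on UNIV (\<lambda>y. h (- y))"
      using continuous_on_compose2[of UNIV h UNIV "\<lambda>y. - y"] by auto
  qed
  thus ?thesis by blast
qed

lemma two_atoms:
  assumes M: "M \<in> Prob_R" and pq: "p \<noteq> q" and mp: "measure M {p} = 1/2" and mq: "measure M {q} = 1/2"
    and I: "I \<in> sets borel"
  shows "measure M I = ((if p \<in> I then 1 else 0) + (if q \<in> I then 1 else 0)) / 2"
proof -
  have sM: "sets M = sets borel" and ps: "prob_space M" using M unfolding Prob_R_def by auto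
  interpret prob_space M by (rule ps)
  have sp: "space M = UNIV" using sets_eq_imp_space_eq[OF sM] by simp
  have Is: "I \<in> events" using I sM by simp
  have pqs: "{p} \<in> events" "{q} \<in> events" "{p,q} \<in> events" using sM by auto
  have mpq: "measure M {p,q} = 1"
  proof -
    have "measure M ({p} \<union> {q}) = measure M {p} + measure M {q}"
      using pqs pq by (intro finite_measure_Union) auto
    moreover have "{p} \<union> {q} = {p,q}" by auto
    ultimately show ?thesis using mp mq by simp
  qed
  have c0: "measure M (UNIV - {p,q}) = 0"
    using prob_compl[OF pqs(3)] mpq sp by simp
  have d0: "measure M (I - {p,q}) = 0"
  proof -
    have "measure M (I - {p,q}) \<le> measure M (UNIV - {p,q})"
      using sets.compl_sets[OF pqs(3)] Is sp by (intro finite_measure_mono) auto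
    thus ?thesis using c0 measure_nonneg[of M "I - {p,q}"] by linarith
  qed
  have "measure M I = measure M ((I \<inter> {p,q}) \<union> (I - {p,q}))" by (metis Int_Diff_Un)
  also have "\<dots> = measure M (I \<inter> {p,q}) + measure M (I - {p,q})"
    using Is pqs by (intro finite_measure_Union) auto
  finally have e: "measure M I = measure M (I \<inter> {p,q})" using d0 by simp
  show ?thesis
  proof (cases "p \<in> I"; cases "q \<in> I")
    assume "p \<in> I" "q \<in> I" thus ?thesis using e mpq by (simp add: insert_absorb)
  next
    assume "p \<in> I" "q \<notin> I"
    hence "I \<inter> {p,q} = {p}" by auto
    thus ?thesis using e mp \<open>p \<in> I\<close> \<open>q \<notin> I\<close> by simp
  next
    assume "p \<notin> I" "q \<in> I"
    hence "I \<inter> {p,q} = {q}" by auto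
    thus ?thesis using e mq \<open>p \<notin> I\<close> \<open>q \<in> I\<close> by simp
  next
    assume "p \<notin> I" "q \<notin> I"
    hence "I \<inter> {p,q} = {}" by auto
    thus ?thesis using e \<open>p \<notin> I\<close> \<open>q \<notin> I\<close> by simp
  qed
qed

definition twoM :: "real \<Rightarrow> real \<Rightarrow> real measure" where
  "twoM a b = distr (measure_pmf (pmf_of_set {a,b})) borel (\<lambda>x. x)"

lemma twoM_Prob: "twoM a b \<in> Prob_R"
  unfolding Prob_R_def twoM_def
  by (auto intro!: prob_space.prob_space_distr simp: measure_pmf.prob_space_axioms)

lemma twoM_atom:
  assumes "a \<noteq> b"
  shows "measure (twoM a b) {a} = 1/2" "measure (twoM a b) {b} = 1/2"
  using assms unfolding twoM_def
  by (auto simp: measure_distr measure_pmf_of_set)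

lemma sep_sym: "distinct [p,q,r,s] \<Longrightarrow> sep p q r s \<Longrightarrow> sep r s p q"
  unfolding sep_def betw_def distinct.simps set_simps by (smt (verit) insert_iff empty_iff)

lemma kuiper_sep:
  assumes M: "M \<in> Prob_R" "measure M {p} = 1/2" "measure M {q} = 1/2"
    and N: "N \<in> Prob_R" "measure N {r} = 1/2" "measure N {s} = 1/2"
    and d: "distinct [p,q,r,s]"
  shows "sep p q r s \<Longrightarrow> kuiper_dist M N \<le> 1/2"
    and "\<not> sep p q r s \<Longrightarrow> kuiper_dist M N \<ge> 1"
proof -
  have MI: "measure M I = ((if p \<in> I then 1 else 0) + (if q \<in> I then 1 else 0)) / 2"
    and NI: "measure N I = ((if r \<in> I then 1 else 0) + (if s \<in> I then 1 else 0)) / 2"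
    if "nondeg_interval I" for I
    using two_atoms[OF M(1) _ M(2,3)] two_atoms[OF N(1) _ N(2,3)] d
      real_interval_borel_measurable that unfolding nondeg_interval_def by auto
  have conv: "x \<in> I" if "nondeg_interval I" "a \<in> I" "b \<in> I" "betw a x b" for I a b x
    using that unfolding nondeg_interval_def is_interval_1 betw_def
    by (meson less_imp_le)
  {
    assume sp: "sep p q r s"
    have sp2: "sep r s p q" using sep_sym[OF d sp] .
    show "kuiper_dist M N \<le> 1/2" unfolding kuiper_dist_def
    proof (rule cSUP_least)
      show "{I. nondeg_interval I} \<noteq> {}"
      proof -
        have "is_interval (UNIV::real set)" by simp
        hence "nondeg_interval UNIV" unfolding nondeg_interval_def
          using UNIV_I zero_less_one by blast
        thus ?thesis by blast
      qed
    next
      fix I assume "I \<in> {I. nondeg_interval I}"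
      hence I: "nondeg_interval I" by simp
      have 1: "\<not> (p \<in> I \<and> q \<in> I \<and> r \<notin> I \<and> s \<notin> I)"
        using sp conv[OF I, of p q r] conv[OF I, of p q s] unfolding sep_def by blast
      have 2: "\<not> (r \<in> I \<and> s \<in> I \<and> p \<notin> I \<and> q \<notin> I)"
        using sp2 conv[OF I, of r s p] conv[OF I, of r s q] unfolding sep_def by blast
      show "\<bar>measure M I - measure N I\<bar> \<le> 1/2"
        unfolding MI[OF I] NI[OF I] using 1 2 by (auto split: if_splits)
    qed
  }
  {
    assume ns: "\<not> sep p q r s"
    have bdd: "bdd_above ((\<lambda>I. \<bar>measure M I - measure N I\<bar>) ` {I. nondeg_interval I})"
    proof (rule bdd_aboveI2)
      fix I
      interpret m: prob_space M using M unfolding Prob_R_def by auto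
      interpret n: prob_space N using N unfolding Prob_R_def by auto
      show "\<bar>measure M I - measure N I\<bar> \<le> 2"
        using m.prob_le_1[of I] n.prob_le_1[of I] measure_nonneg[of M I] measure_nonneg[of N I]
        by linarith
    qed
    show "kuiper_dist M N \<ge> 1" unfolding kuiper_dist_def
    proof (cases "betw p r q")
      case False
      hence F2: "\<not> betw p s q" using ns unfolding sep_def by auto
      let ?I = "{min p q..max p q}"
      have "min p q \<in> ?I" "max p q \<in> ?I" "min p q < max p q" using d by auto
      hence I: "nondeg_interval ?I" unfolding nondeg_interval_def
        using is_interval_cc[of "min p q" "max p q"] by blast
      have "p \<in> ?I" "q \<in> ?I" by auto
      moreover have "r \<notin> ?I" "s \<notin> ?I" using False F2 d unfolding betw_def by auto
      ultimately show "1 \<le> (SUP I\<in>{I. nondeg_interval I}. \<bar>measure M I - measure N I\<bar>)"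
        using I by (intro cSUP_upper2[OF bdd, of ?I]) (auto simp: MI[OF I] NI[OF I])
    next
      case True
      hence T2: "betw p s q" using ns unfolding sep_def by auto
      let ?I = "{min r s..max r s}"
      have "min r s \<in> ?I" "max r s \<in> ?I" "min r s < max r s" using d by auto
      hence I: "nondeg_interval ?I" unfolding nondeg_interval_def
        using is_interval_cc[of "min r s" "max r s"] by blast
      have "r \<in> ?I" "s \<in> ?I" by auto
      moreover have "p \<notin> ?I" "q \<notin> ?I" using True T2 d unfolding betw_def by auto
      ultimately show "1 \<le> (SUP I\<in>{I. nondeg_interval I}. \<bar>measure M I - measure N I\<bar>)"
        using I by (intro cSUP_upper2[OF bdd, of ?I]) (auto simp: MI[OF I] NI[OF I])
    qed
  }
qed

theorem lemma3p4:
  fixes \<phi> :: "real measure \<Rightarrow> real measure" and f :: "real \<Rightarrow> real"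
  assumes "\<phi> ` Prob_R = Prob_R"
    and "\<forall>\<mu>\<in>Prob_R. \<forall>\<nu>\<in>Prob_R. kuiper_dist (\<phi> \<mu>) (\<phi> \<nu>) = kuiper_dist \<mu> \<nu>"
    and "bij f"
    and "\<forall>\<mu>\<in>Prob_R. \<forall>x. measure (\<phi> \<mu>) {f x} = measure \<mu> {x}"
  shows "\<exists>g. homeomorphism UNIV UNIV f g"
proof -
  have inj: "inj f" and su: "surj f" using assms(3) bij_is_inj bij_is_surj by auto
  have img: "\<phi> (twoM a b) \<in> Prob_R" for a b using assms(1) twoM_Prob by blast
  have fat: "measure (\<phi> (twoM a b)) {f a} = 1/2" "measure (\<phi> (twoM a b)) {f b} = 1/2" if "a \<noteq> b" for a b
    using assms(4) twoM_Prob twoM_atom[OF that] by auto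
  have sp: "SP f" unfolding SP_def
  proof (intro allI impI)
    fix a b c d :: real assume d: "distinct [a,b,c,d]" and s: "sep a b c d"
    have ab: "a \<noteq> b" and cd: "c \<noteq> d" using d by auto
    have "kuiper_dist (twoM a b) (twoM c d) \<le> 1/2"
      using kuiper_sep(1)[OF twoM_Prob twoM_atom[OF ab] twoM_Prob twoM_atom[OF cd] d s] .
    hence k: "kuiper_dist (\<phi> (twoM a b)) (\<phi> (twoM c d)) \<le> 1/2"
      using assms(2) twoM_Prob by simp
    have d': "distinct [f a, f b, f c, f d]" using d inj by (auto dest: injD)
    show "sep (f a) (f b) (f c) (f d)"
    proof (rule ccontr)
      assume "\<not> sep (f a) (f b) (f c) (f d)"
      from kuiper_sep(2)[OF img fat[OF ab] img fat[OF cd] d' this] k show False by simp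
    qed
  qed
  have "strict_mono f \<or> strict_mono (\<lambda>x. - f x)"
    by (rule lemMono[OF inj]) (rule lemBetw[OF inj su sp])
  thus ?thesis by (rule homeo_final[OF assms(3)])
qed

end
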